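(* Let $n\ge 1$ and let $\tau\ge 0$ be real. Set $\tau'=\dfrac{\tau}{(n-1)\tau+n}$. Then $$\Omega_n(\tau')\subset\tilde\Omega(\tau')\subset\Omega^n(\tau)\subset\Omega_n(n\tau),$$ where these subsets of $\mathbb{R}^n$ are defined as follows. For $\sigma\ge 0$: $\Omega_n(\sigma)$ is the set of $\omega\in\mathbb{R}^n$ for which there is $C>0$ with $\|T\omega\|_{\mathbb{Z}}\ge C\,T^{-(1+\sigma)/n}$ for every integer $T\ge 1$; $\Omega^n(\sigma)$ is the set of $\omega\in\mathbb{R}^n$ for which there is $C>0$ with $\|\langle k,\omega\rangle\|_{\mathbb{Z}}\ge C\,|k|^{-(1+\sigma)n}$ for every $k\in\mathbb{Z}^n\setminus\{0\}$; $\Omega(\sigma)$ is the set of $\omega\in\mathbb{R}^n$ for which there is $C>0$ with $T_{i+1}(\omega)\le C\,T_i(\omega)^{1+\sigma}$ for every index $i\ge 0$ for which $T_{i+1}(\omega)$ is defined; $\tilde\Omega(\sigma)$ is the set of $\omega\in\Omega(\sigma)$ such that $\langle k,\omega\rangle\notin\mathbb{Z}$ for every $k\in\mathbb{Z}^n\setminus\{0\}$.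
   Context: For $\omega=(\omega_1,\dots,\omega_n)\in\mathbb{R}^n$, $|\omega|=\max_i|\omega_i|$, $\langle\cdot,\cdot\rangle$ is the standard scalar product, $\|\omega\|_{\mathbb{Z}}=\min_{k\in\mathbb{Z}^n}|\omega-k|$, and for $x\in\mathbb{R}$, $\|x\|_{\mathbb{Z}}=\min_{k\in\mathbb{Z}}|x-k|$. The periods $T_i(\omega)$ of $\omega$ are defined by $T_0(\omega)=1$ and $T_{i+1}(\omega)=\min\{T\in\mathbb{N},\,T\ge1 : \|T\omega\|_{\mathbb{Z}}<\|T_i(\omega)\omega\|_{\mathbb{Z}}\}$ (the sequence stops if this set is empty, which happens only when $\omega$ is rational). *)

theory Defs
  imports "HOL-Analysis.Analysis"
begin

definition supnorm :: "real ^ 'n \<Rightarrow> real" where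
  "supnorm w = Max (range (\<lambda>i. \<bar>w $ i\<bar>))"

definition int_vecs :: "(real ^ 'n) set" where
  "int_vecs = {k. \<forall>i. k $ i \<in> \<int>}"

definition znorm :: "real ^ 'n \<Rightarrow> real" where
  "znorm w = Inf ((\<lambda>k. supnorm (w - k)) ` int_vecs)"

definition znorm1 :: "real \<Rightarrow> real" where
  "znorm1 x = Inf ((\<lambda>k::int. \<bar>x - of_int k\<bar>) ` UNIV)"

text \<open>Periods T_i(w); None means the sequence has stopped (T_i undefined).\<close>
primrec periods :: "real ^ 'n \<Rightarrow> nat \<Rightarrow> nat option" where
  "periods w 0 = Some 1"
| "periods w (Suc i) =
     (case periods w i of
        None \<Rightarrow> None
      | Some t \<Rightarrow>
          (if \<exists>T::nat. T \<ge> 1 \<and> znorm (real T *\<^sub>R w) < znorm (real t *\<^sub>R w)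
           then Some (LEAST T::nat. T \<ge> 1 \<and> znorm (real T *\<^sub>R w) < znorm (real t *\<^sub>R w))
           else None))"

definition Omega_low :: "real \<Rightarrow> (real ^ 'n) set" where
  "Omega_low \<sigma> = {w. \<exists>C>0. \<forall>T::nat. T \<ge> 1 \<longrightarrow>
      znorm (real T *\<^sub>R w) \<ge> C * real T powr (-(1 + \<sigma>) / real CARD('n))}"

definition Omega_up :: "real \<Rightarrow> (real ^ 'n) set" where
  "Omega_up \<sigma> = {w. \<exists>C>0. \<forall>k \<in> int_vecs. k \<noteq> 0 \<longrightarrow>
      znorm1 (k \<bullet> w) \<ge> C * supnorm k powr (-(1 + \<sigma>) * real CARD('n))}"

definition Omega_per :: "real \<Rightarrow> (real ^ 'n) set" where
  "Omega_per \<sigma> = {w. \<exists>C>0. \<forall>i t t'. periods w i = Some t \<longrightarrow> periods w (Suc i) = Some t' \<longrightarrow>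
      real t' \<le> C * real t powr (1 + \<sigma>)}"

definition Omega_tilde :: "real \<Rightarrow> (real ^ 'n) set" where
  "Omega_tilde \<sigma> = {w \<in> Omega_per \<sigma>. \<forall>k \<in> int_vecs. k \<noteq> 0 \<longrightarrow> k \<bullet> w \<notin> \<int>}"

end

theory Submission
  imports Defs
begin

lemma supnorm_ge: "\<bar>w $ i\<bar> \<le> supnorm w"
  unfolding supnorm_def by (rule Max_ge) auto

lemma supnorm_attained: "\<exists>i. supnorm w = \<bar>w $ i\<bar>"
proof -
  have "Max (range (\<lambda>i. \<bar>w $ i\<bar>)) \<in> range (\<lambda>i. \<bar>w $ i\<bar>)"
    by (rule Max_in) auto
  then obtain i where "Max (range (\<lambda>i. \<bar>w $ i\<bar>)) = \<bar>w $ i\<bar>" by (metis rangeE)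
  then show ?thesis unfolding supnorm_def by blast
qed

lemma supnorm_le: "(\<And>i. \<bar>w $ i\<bar> \<le> B) \<Longrightarrow> supnorm w \<le> B"
  using supnorm_attained[of w] by metis

lemma supnorm_nonneg: "supnorm w \<ge> 0"
  using supnorm_ge[of w] by (meson abs_ge_zero order_trans)

definition rnd :: "real ^ 'n \<Rightarrow> real ^ 'n" where
  "rnd w = (\<chi> i. of_int (round (w $ i)))"

lemma rnd_int: "rnd w \<in> int_vecs"
  unfolding rnd_def int_vecs_def by auto

lemma znorm_eq: "znorm w = supnorm (w - rnd w)"
  unfolding znorm_def
proof (rule cInf_eq_minimum)
  show "supnorm (w - rnd w) \<in> (\<lambda>k. supnorm (w - k)) ` int_vecs" using rnd_int by auto
  fix x assume "x \<in> (\<lambda>k. supnorm (w - k)) ` int_vecs"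
  then obtain k where k: "k \<in> int_vecs" "x = supnorm (w - k)" by auto
  show "supnorm (w - rnd w) \<le> x"
  proof (rule supnorm_le)
    fix i
    from k(1) obtain z where z: "k $ i = of_int z" unfolding int_vecs_def by (auto elim: Ints_cases)
    have "\<bar>(w - rnd w) $ i\<bar> = \<bar>w $ i - of_int (round (w $ i))\<bar>" by (simp add: rnd_def)
    also have "\<dots> \<le> \<bar>w $ i - of_int z\<bar>" by (rule round_diff_minimal)
    also have "\<dots> = \<bar>(w - k) $ i\<bar>" using z by simp
    also have "\<dots> \<le> x" using k(2) supnorm_ge[of "w - k" i] by simp
    finally show "\<bar>(w - rnd w) $ i\<bar> \<le> x" .
  qed
qed

lemma znorm_coord: "\<bar>w $ i - of_int (round (w $ i))\<bar> \<le> znorm w"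
  using supnorm_ge[of "w - rnd w" i] by (simp add: znorm_eq rnd_def)

lemma znorm_nonneg: "znorm w \<ge> 0"
  by (simp add: znorm_eq supnorm_nonneg)

lemma znorm_le_half: "znorm w \<le> 1/2"
  unfolding znorm_eq
proof (rule supnorm_le)
  fix i
  show "\<bar>(w - rnd w) $ i\<bar> \<le> 1/2"
    using of_int_round_abs_le[of "w $ i"] by (simp add: rnd_def abs_minus_commute)
qed

lemma znorm_le: "(\<And>i. \<exists>z. \<bar>w $ i - of_int z\<bar> \<le> B) \<Longrightarrow> znorm w \<le> B"
  unfolding znorm_eq
proof (rule supnorm_le)
  fix i assume "\<And>i. \<exists>z. \<bar>w $ i - of_int z\<bar> \<le> B"
  then obtain z where "\<bar>w $ i - of_int z\<bar> \<le> B" by blast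
  then show "\<bar>(w - rnd w) $ i\<bar> \<le> B"
    using round_diff_minimal[of "w $ i" z] by (simp add: rnd_def)
qed

lemma znorm_lt: "(\<And>i. \<exists>z. \<bar>w $ i - of_int z\<bar> < B) \<Longrightarrow> znorm w < B"
proof -
  assume a: "\<And>i. \<exists>z. \<bar>w $ i - of_int z\<bar> < B"
  obtain i where i: "znorm w = \<bar>(w - rnd w) $ i\<bar>" using supnorm_attained znorm_eq by metis
  from a obtain z where "\<bar>w $ i - of_int z\<bar> < B" by blast
  then show ?thesis using i round_diff_minimal[of "w $ i" z] by (simp add: rnd_def)
qed

lemma znorm1_eq: "znorm1 x = \<bar>x - of_int (round x)\<bar>"
  unfolding znorm1_def
  by (rule cInf_eq_minimum) (auto intro: round_diff_minimal)

lemma znorm1_le: "znorm1 x \<le> \<bar>x - of_int m\<bar>"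
  by (simp add: znorm1_eq round_diff_minimal)

lemma pigeon_boxes:
  fixes \<alpha> :: "'a \<Rightarrow> real" and g :: "nat \<Rightarrow> 'b" and J :: "'a set" and M N :: nat
  assumes J: "finite J" and M: "M \<ge> 1" and S: "finite S" and g: "\<forall>T\<le>N. g T \<in> S"
    and card: "card S * M ^ card J \<le> N"
  shows "\<exists>T1 T2. T1 < T2 \<and> T2 \<le> N \<and> g T1 = g T2 \<and>
     (\<forall>j\<in>J. \<bar>frac (real T2 * \<alpha> j) - frac (real T1 * \<alpha> j)\<bar> < 1 / real M)"
proof -
  define L where "L T = (restrict (\<lambda>j. \<lfloor>real M * frac (real T * \<alpha> j)\<rfloor>) J, g T)" for T
  define B where "B = (PiE J (\<lambda>_. {0..<int M})) \<times> S"
  have sub: "L ` {0..N} \<subseteq> B"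
  proof
    fix x assume "x \<in> L ` {0..N}"
    then obtain T where T: "T \<le> N" "x = L T" by auto
    have "\<lfloor>real M * frac (real T * \<alpha> j)\<rfloor> \<in> {0..<int M}" for j
    proof -
      have "0 \<le> real M * frac (real T * \<alpha> j)" by (simp add: frac_ge_0)
      moreover have "real M * frac (real T * \<alpha> j) < real M"
        using M frac_lt_1[of "real T * \<alpha> j"] by simp
      ultimately show ?thesis by (simp add: floor_less_iff)
    qed
    then have "restrict (\<lambda>j. \<lfloor>real M * frac (real T * \<alpha> j)\<rfloor>) J \<in> PiE J (\<lambda>_. {0..<int M})"
      by (simp add: restrict_PiE_iff)
    then show "x \<in> B" using T g unfolding L_def B_def by simp
  qed
  have fB: "finite B" using J S unfolding B_def by (auto intro: finite_PiE)
  have cB: "card B = M ^ card J * card S"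
    using J S unfolding B_def by (simp add: card_cartesian_product card_PiE)
  have "\<not> inj_on L {0..N}"
  proof
    assume "inj_on L {0..N}"
    then have "card {0..N} \<le> card B" using card_inj_on_le[OF _ sub fB] by blast
    then show False using cB card by (simp add: mult.commute)
  qed
  then obtain T1 T2 where T: "T1 \<in> {0..N}" "T2 \<in> {0..N}" "T1 \<noteq> T2" "L T1 = L T2"
    unfolding inj_on_def by blast
  have key: "\<exists>T1 T2. T1 < T2 \<and> T2 \<le> N \<and> L T1 = L T2"
  proof (cases "T1 < T2")
    case True then show ?thesis using T by auto
  next
    case False then show ?thesis using T by (intro exI[of _ T2] exI[of _ T1]) auto
  qed
  then obtain U1 U2 where U: "U1 < U2" "U2 \<le> N" "L U1 = L U2" by blast
  have "\<bar>frac (real U2 * \<alpha> j) - frac (real U1 * \<alpha> j)\<bar> < 1 / real M" if j: "j \<in> J" for j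
  proof -
    have "restrict (\<lambda>j. \<lfloor>real M * frac (real U1 * \<alpha> j)\<rfloor>) J = restrict (\<lambda>j. \<lfloor>real M * frac (real U2 * \<alpha> j)\<rfloor>) J"
      using U(3) unfolding L_def by simp
    then have "restrict (\<lambda>j. \<lfloor>real M * frac (real U1 * \<alpha> j)\<rfloor>) J j = restrict (\<lambda>j. \<lfloor>real M * frac (real U2 * \<alpha> j)\<rfloor>) J j"
      by (rule fun_cong)
    then have "\<lfloor>real M * frac (real U1 * \<alpha> j)\<rfloor> = \<lfloor>real M * frac (real U2 * \<alpha> j)\<rfloor>"
      using j by simp
    then have "\<bar>real M * frac (real U1 * \<alpha> j) - real M * frac (real U2 * \<alpha> j)\<bar> < 1"
      by (rule floor_eq_imp_diff_1)
    then have "real M * \<bar>frac (real U2 * \<alpha> j) - frac (real U1 * \<alpha> j)\<bar> < 1"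
      by (simp add: abs_minus_commute right_diff_distrib[symmetric] abs_mult)
    then show ?thesis using M by (simp add: field_simps)
  qed
  moreover have "g U1 = g U2" using U(3) unfolding L_def by simp
  ultimately show ?thesis using U by blast
qed

lemma inner_sum: "(k::real^'n) \<bullet> w = (\<Sum>i\<in>UNIV. k $ i * w $ i)"
  by (simp add: inner_vec_def)

lemma frac_diff:
  assumes "U1 < U2"
  shows "real (U2 - U1) * x = of_int (\<lfloor>real U2 * x\<rfloor> - \<lfloor>real U1 * x\<rfloor>)
           + (frac (real U2 * x) - frac (real U1 * x))"
  using assms by (simp add: frac_def of_nat_diff algebra_simps)

lemma dirichlet:
  fixes w :: "real ^ 'n" and M :: nat
  assumes M: "M \<ge> 1"
  shows "\<exists>T::nat. 1 \<le> T \<and> T \<le> M ^ CARD('n) \<and> znorm (real T *\<^sub>R w) < 1 / real M"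
proof -
  obtain U1 U2 where U: "U1 < U2" "U2 \<le> M ^ CARD('n)"
    "\<forall>j\<in>(UNIV::'n set). \<bar>frac (real U2 * w $ j) - frac (real U1 * w $ j)\<bar> < 1 / real M"
    using pigeon_boxes[of "UNIV::'n set" M "{()}" "M ^ CARD('n)" "\<lambda>_. ()" "\<lambda>j. w $ j"] M
    by auto
  have "znorm (real (U2 - U1) *\<^sub>R w) < 1 / real M"
  proof (rule znorm_lt)
    fix i
    show "\<exists>z. \<bar>(real (U2 - U1) *\<^sub>R w) $ i - of_int z\<bar> < 1 / real M"
      using U(3) frac_diff[OF U(1), of "w $ i"]
      by (intro exI[of _ "\<lfloor>real U2 * w $ i\<rfloor> - \<lfloor>real U1 * w $ i\<rfloor>"]) auto
  qed
  then show ?thesis using U by (intro exI[of _ "U2 - U1"]) auto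
qed

lemma stepA:
  fixes w k :: "real ^ 'n" and T :: nat and m :: int
  assumes k: "k \<in> int_vecs" and small: "real T * \<bar>k \<bullet> w - of_int m\<bar> \<le> 1/2"
  shows "real T * \<bar>k \<bullet> w - of_int m\<bar> \<le> real CARD('n) * supnorm k * znorm (real T *\<^sub>R w)"
proof -
  define p where "p = rnd (real T *\<^sub>R w)"
  define e where "e = real T *\<^sub>R w - p"
  define \<epsilon> where "\<epsilon> = znorm (real T *\<^sub>R w)"
  have e_le: "\<bar>e $ i\<bar> \<le> \<epsilon>" for i
    using znorm_coord[of "real T *\<^sub>R w" i] unfolding e_def p_def \<epsilon>_def rnd_def by simp
  have pint: "k \<bullet> p \<in> \<int>"
  proof -
    have "k \<bullet> p = (\<Sum>i\<in>UNIV. k $ i * p $ i)" by (rule inner_sum)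
    also have "\<dots> \<in> \<int>"
      using k unfolding int_vecs_def p_def rnd_def by (intro Ints_sum Ints_mult) auto
    finally show ?thesis .
  qed
  have eb: "\<bar>k \<bullet> e\<bar> \<le> real CARD('n) * supnorm k * \<epsilon>"
  proof -
    have "\<bar>k \<bullet> e\<bar> = \<bar>\<Sum>i\<in>UNIV. k $ i * e $ i\<bar>" by (simp add: inner_sum)
    also have "\<dots> \<le> (\<Sum>i\<in>UNIV. \<bar>k $ i * e $ i\<bar>)" by (rule sum_abs)
    also have "\<dots> \<le> (\<Sum>i\<in>(UNIV::'n set). supnorm k * \<epsilon>)"
      by (intro sum_mono) (simp add: abs_mult mult_mono supnorm_ge e_le supnorm_nonneg)
    also have "\<dots> = real CARD('n) * supnorm k * \<epsilon>" by simp
    finally show ?thesis .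
  qed
  have id: "real T * (k \<bullet> w - of_int m) - k \<bullet> e = k \<bullet> p - real T * of_int m"
    unfolding e_def by (simp add: inner_diff_right algebra_simps)
  have "k \<bullet> p - real T * of_int m \<in> \<int>" using pint by (intro Ints_diff Ints_mult) auto
  then have I: "real T * (k \<bullet> w - of_int m) - k \<bullet> e \<in> \<int>" using id by simp
  show ?thesis
  proof (cases "\<bar>k \<bullet> e\<bar> < 1/2")
    case True
    have "\<bar>real T * (k \<bullet> w - of_int m)\<bar> \<le> 1/2" using small by (simp add: abs_mult)
    then have "\<bar>real T * (k \<bullet> w - of_int m) - k \<bullet> e\<bar> < 1" using True by linarith
    then have "real T * (k \<bullet> w - of_int m) - k \<bullet> e = 0" using I Ints_nonzero_abs_less1 by blast
    then have "real T * \<bar>k \<bullet> w - of_int m\<bar> = \<bar>k \<bullet> e\<bar>" by (metis abs_mult abs_of_nat eq_iff_diff_eq_0)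
    then show ?thesis using eb \<epsilon>_def by simp
  next
    case False
    then show ?thesis using eb small unfolding \<epsilon>_def by linarith
  qed
qed

lemma near_dirichlet:
  fixes w k :: "real ^ 'n" and m :: int and M K N :: nat and j0 :: 'n
  assumes k: "k \<in> int_vecs" and kj0: "\<bar>k $ j0\<bar> = real K" and Kmax: "\<And>i. \<bar>k $ i\<bar> \<le> real K"
    and K1: "K \<ge> 1" and M: "M \<ge> 1"
    and N_def: "N = M ^ (CARD('n) - 1) * (2 * CARD('n) * K + 3)"
    and small: "real N * \<bar>k \<bullet> w - of_int m\<bar> \<le> 1"
  shows "\<exists>T::nat. 1 \<le> T \<and> T \<le> N \<and>
     znorm (real T *\<^sub>R w) \<le> real N * \<bar>k \<bullet> w - of_int m\<bar> / real K + real CARD('n) / real M"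
proof -
  define n where "n = CARD('n)"
  define \<eta> where "\<eta> = k \<bullet> w - of_int m"
  define kz where "kz i = \<lfloor>k $ i\<rfloor>" for i
  have kz: "k $ i = of_int (kz i)" for i
    using k unfolding int_vecs_def kz_def by (auto elim: Ints_cases)
  define g where "g T = int T * m - (\<Sum>i\<in>UNIV. kz i * \<lfloor>real T * w $ i\<rfloor>)" for T :: nat
  have gid: "real_of_int (g T) = (\<Sum>i\<in>UNIV. k $ i * frac (real T * w $ i)) - real T * \<eta>" for T
  proof -
    have "(\<Sum>i\<in>UNIV. k $ i * frac (real T * w $ i))
       = real T * (\<Sum>i\<in>UNIV. k $ i * w $ i) - (\<Sum>i\<in>UNIV. k $ i * of_int \<lfloor>real T * w $ i\<rfloor>)"
      by (simp add: frac_def algebra_simps sum_subtractf sum_distrib_left)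
    then show ?thesis
      unfolding g_def \<eta>_def inner_sum by (simp add: kz algebra_simps)
  qed
  have sumfrac: "\<bar>\<Sum>i\<in>UNIV. k $ i * frac (real T * w $ i)\<bar> \<le> real n * real K" for T
  proof -
    have "\<bar>\<Sum>i\<in>UNIV. k $ i * frac (real T * w $ i)\<bar> \<le> (\<Sum>i\<in>UNIV. \<bar>k $ i * frac (real T * w $ i)\<bar>)"
      by (rule sum_abs)
    also have "\<dots> \<le> (\<Sum>i\<in>(UNIV::'n set). real K)"
    proof (intro sum_mono)
      fix i
      have "\<bar>frac (real T * w $ i)\<bar> \<le> 1" using frac_lt_1[of "real T * w $ i"] frac_ge_0[of "real T * w $ i"] by simp
      then show "\<bar>k $ i * frac (real T * w $ i)\<bar> \<le> real K"
      proof -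
        have "\<bar>k $ i\<bar> * \<bar>frac (real T * w $ i)\<bar> \<le> real K * 1"
          using Kmax[of i] \<open>\<bar>frac (real T * w $ i)\<bar> \<le> 1\<close> by (intro mult_mono) auto
        then show ?thesis by (simp add: abs_mult)
      qed
    qed
    also have "\<dots> = real n * real K" by (simp add: n_def)
    finally show ?thesis .
  qed
  define S where "S = {-(int (n * K) + 1) .. int (n * K) + 1}"
  have gS: "\<forall>T\<le>N. g T \<in> S"
  proof (intro allI impI)
    fix T assume T: "T \<le> N"
    have "real T * \<bar>\<eta>\<bar> \<le> real N * \<bar>\<eta>\<bar>" using T by (simp add: mult_right_mono)
    then have "\<bar>real T * \<eta>\<bar> \<le> 1" using small unfolding \<eta>_def by (simp add: abs_mult)
    then have "\<bar>real_of_int (g T)\<bar> \<le> real n * real K + 1" using gid[of T] sumfrac[of T] by linarith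
    then have "real_of_int \<bar>g T\<bar> \<le> real_of_int (int (n * K) + 1)" by simp
    then have "\<bar>g T\<bar> \<le> int (n * K) + 1" by (simp only: of_int_le_iff)
    then show "g T \<in> S" unfolding S_def by auto
  qed
  have cS: "card S = 2 * n * K + 3" unfolding S_def by simp (simp add: nat_add_distrib nat_mult_distrib)
  define J where "J = (UNIV::'n set) - {j0}"
  have cJ: "card J = n - 1" unfolding J_def n_def by (simp add: card_Diff_subset)
  have cc: "card S * M ^ card J \<le> N" unfolding cS cJ N_def n_def by (simp add: mult.commute[of "_ + 3"])
  have fS: "finite S" unfolding S_def by simp
  have fJ: "finite J" by simp
  obtain U1 U2 where U: "U1 < U2" "U2 \<le> N" "g U1 = g U2"
    "\<forall>j\<in>J. \<bar>frac (real U2 * w $ j) - frac (real U1 * w $ j)\<bar> < 1 / real M"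
    using pigeon_boxes[OF fJ M fS gS cc, of "\<lambda>j. w $ j"] by blast
  define d where "d i = frac (real U2 * w $ i) - frac (real U1 * w $ i)" for i
  define T where "T = U2 - U1"
  have TN: "T \<le> N" "1 \<le> T" using U unfolding T_def by auto
  have sumd: "(\<Sum>i\<in>UNIV. k $ i * d i) = real T * \<eta>"
  proof -
    have "(\<Sum>i\<in>UNIV. k $ i * d i) = (\<Sum>i\<in>UNIV. k $ i * frac (real U2 * w $ i)) - (\<Sum>i\<in>UNIV. k $ i * frac (real U1 * w $ i))"
      unfolding d_def by (simp add: algebra_simps sum_subtractf)
    also have "\<dots> = (real_of_int (g U2) + real U2 * \<eta>) - (real_of_int (g U1) + real U1 * \<eta>)"
      using gid[of U1] gid[of U2] by simp
    also have "\<dots> = real T * \<eta>" using U(1,3) unfolding T_def by (simp add: of_nat_diff algebra_simps)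
    finally show ?thesis .
  qed
  have dJ: "\<bar>d i\<bar> < 1 / real M" if "i \<noteq> j0" for i using U(4) that unfolding J_def d_def by auto
  have sJ: "\<bar>\<Sum>i\<in>J. k $ i * d i\<bar> \<le> real (n - 1) * real K / real M"
  proof -
    have "\<bar>\<Sum>i\<in>J. k $ i * d i\<bar> \<le> (\<Sum>i\<in>J. \<bar>k $ i * d i\<bar>)" by (rule sum_abs)
    also have "\<dots> \<le> (\<Sum>i\<in>J. real K * (1 / real M))"
    proof (intro sum_mono)
      fix i assume "i \<in> J"
      then have "\<bar>d i\<bar> \<le> 1 / real M" using dJ unfolding J_def by (auto intro: less_imp_le)
      then show "\<bar>k $ i * d i\<bar> \<le> real K * (1 / real M)"
      proof -
        have "\<bar>k $ i\<bar> * \<bar>d i\<bar> \<le> real K * (1 / real M)"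
          using Kmax[of i] \<open>\<bar>d i\<bar> \<le> 1 / real M\<close> by (intro mult_mono) auto
        then show ?thesis by (simp add: abs_mult)
      qed
    qed
    also have "\<dots> = real (n - 1) * real K / real M" using cJ by simp
    finally show ?thesis .
  qed
  have split: "(\<Sum>i\<in>UNIV. k $ i * d i) = k $ j0 * d j0 + (\<Sum>i\<in>J. k $ i * d i)"
    unfolding J_def by (simp add: sum.remove)
  have n1: "n \<ge> 1" unfolding n_def by (simp add: Suc_leI)
  have "k $ j0 * d j0 = real T * \<eta> - (\<Sum>i\<in>J. k $ i * d i)" using sumd split by linarith
  then have "\<bar>k $ j0 * d j0\<bar> \<le> \<bar>real T * \<eta>\<bar> + \<bar>\<Sum>i\<in>J. k $ i * d i\<bar>"
    by (simp add: abs_triangle_ineq4)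
  then have "\<bar>k $ j0 * d j0\<bar> \<le> real T * \<bar>\<eta>\<bar> + real (n - 1) * real K / real M"
    using sJ by (simp add: abs_mult)
  also have "\<dots> \<le> real N * \<bar>\<eta>\<bar> + real n * real K / real M"
  proof -
    have "real T * \<bar>\<eta>\<bar> \<le> real N * \<bar>\<eta>\<bar>" using TN by (simp add: mult_right_mono)
    moreover have "real (n - 1) * real K / real M \<le> real n * real K / real M"
      using n1 M by (intro divide_right_mono mult_right_mono) auto
    ultimately show ?thesis by linarith
  qed
  finally have "real K * \<bar>d j0\<bar> \<le> real N * \<bar>\<eta>\<bar> + real n * real K / real M"
    using kj0 by (simp add: abs_mult)
  then have dj0: "\<bar>d j0\<bar> \<le> real N * \<bar>\<eta>\<bar> / real K + real n / real M"
    using K1 by (simp add: field_simps)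
  have bnd: "\<bar>d i\<bar> \<le> real N * \<bar>\<eta>\<bar> / real K + real n / real M" for i
  proof (cases "i = j0")
    case True then show ?thesis using dj0 by simp
  next
    case False
    have "1 / real M \<le> real n / real M" using n1 M by (simp add: divide_right_mono)
    moreover have "0 \<le> real N * \<bar>\<eta>\<bar> / real K" by simp
    ultimately show ?thesis using dJ[OF False] by linarith
  qed
  have "znorm (real T *\<^sub>R w) \<le> real N * \<bar>\<eta>\<bar> / real K + real n / real M"
  proof (rule znorm_le)
    fix i
    show "\<exists>z. \<bar>(real T *\<^sub>R w) $ i - of_int z\<bar> \<le> real N * \<bar>\<eta>\<bar> / real K + real n / real M"
      using bnd[of i] frac_diff[OF U(1), of "w $ i"]
      by (intro exI[of _ "\<lfloor>real U2 * w $ i\<rfloor> - \<lfloor>real U1 * w $ i\<rfloor>"]) (simp add: T_def d_def)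
  qed
  then show ?thesis using TN unfolding \<eta>_def n_def by blast
qed

lemma periods_ge1: "periods w i = Some t \<Longrightarrow> t \<ge> 1"
proof (induction i arbitrary: t)
  case 0 then show ?case by simp
next
  case (Suc i)
  then obtain t0 where t0: "periods w i = Some t0"
    by (cases "periods w i") auto
  let ?P = "\<lambda>T::nat. T \<ge> 1 \<and> znorm (real T *\<^sub>R w) < znorm (real t0 *\<^sub>R w)"
  have ex: "\<exists>T. ?P T" and t: "t = (LEAST T. ?P T)"
    using Suc.prems t0 by (auto split: if_splits)
  show ?case using LeastI_ex[OF ex] t by simp
qed

lemma periods_Suc_le:
  assumes "periods w i = Some t" "1 \<le> T" "znorm (real T *\<^sub>R w) < znorm (real t *\<^sub>R w)"
  shows "\<exists>t'. periods w (Suc i) = Some t' \<and> t' \<le> T"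
  using assms by (auto intro: Least_le)

definition norel :: "real ^ 'n \<Rightarrow> bool" where
  "norel w \<longleftrightarrow> (\<forall>k\<in>int_vecs. k \<noteq> 0 \<longrightarrow> k \<bullet> w \<notin> \<int>)"

lemma norel_znorm_pos:
  fixes w :: "real ^ 'n"
  assumes nr: "norel w" and T: "T \<ge> 1"
  shows "znorm (real T *\<^sub>R w) > 0"
proof (rule ccontr)
  assume "\<not> ?thesis"
  then have z: "znorm (real T *\<^sub>R w) = 0" using znorm_nonneg[of "real T *\<^sub>R w"] by linarith
  obtain i0 :: 'n where True by blast
  have "\<bar>real T * w $ i0 - of_int (round (real T * w $ i0))\<bar> \<le> 0"
    using znorm_coord[of "real T *\<^sub>R w" i0] z by simp
  then have int: "real T * w $ i0 \<in> \<int>" by (metis abs_le_zero_iff eq_iff_diff_eq_0 Ints_of_int)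
  define k :: "real ^ 'n" where "k = (\<chi> i. if i = i0 then real T else 0)"
  have ki: "k \<in> int_vecs" unfolding int_vecs_def k_def by auto
  have k0: "k \<noteq> 0"
  proof
    assume "k = 0"
    then have "k $ i0 = 0" by simp
    then show False using T unfolding k_def by simp
  qed
  have "k \<bullet> w = real T * w $ i0"
  proof -
    have "(\<Sum>i\<in>UNIV. k $ i * w $ i) = (\<Sum>i\<in>UNIV. if i = i0 then real T * w $ i else 0)"
      unfolding k_def by (intro sum.cong) auto
    also have "\<dots> = real T * w $ i0" by (simp add: sum.delta)
    finally show ?thesis unfolding inner_sum .
  qed
  then show False using nr ki k0 int unfolding norel_def by auto
qed

lemma exists_better:
  fixes w :: "real ^ 'n"
  assumes "\<epsilon> > 0"
  shows "\<exists>T::nat. T \<ge> 1 \<and> znorm (real T *\<^sub>R w) < \<epsilon>"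
proof -
  define M where "M = nat \<lfloor>1 / \<epsilon>\<rfloor> + 1"
  have M1: "M \<ge> 1" unfolding M_def by simp
  have "1 / \<epsilon> < real M" unfolding M_def
    by (metis of_nat_1 of_nat_add add.commute floor_less_iff less_add_one of_int_of_nat_eq
        real_nat_ceiling_ge[of "1/\<epsilon>"] le_less_trans nat_le_iff_add order_less_le_trans le_nat_floor
        linorder_not_le)
  then have "1 / real M < \<epsilon>" using assms M1
    by (simp add: field_simps)
  then show ?thesis using dirichlet[OF M1, of w] by (meson less_trans)
qed

lemma norel_periods_some:
  fixes w :: "real ^ 'n"
  assumes nr: "norel w"
  shows "\<exists>t. periods w i = Some t"
proof (induction i)
  case 0 then show ?case by simp
next
  case (Suc i)
  then obtain t where t: "periods w i = Some t" by blast
  have "t \<ge> 1" using periods_ge1[OF t] .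
  then have "znorm (real t *\<^sub>R w) > 0" using norel_znorm_pos[OF nr] by blast
  then obtain T where "T \<ge> 1" "znorm (real T *\<^sub>R w) < znorm (real t *\<^sub>R w)"
    using exists_better by blast
  then show ?case using periods_Suc_le[OF t] by blast
qed

definition per :: "real ^ 'n \<Rightarrow> nat \<Rightarrow> nat" where
  "per w i = the (periods w i)"

context
  fixes w :: "real ^ 'n"
  assumes nr: "norel w"
begin

lemma per_some: "periods w i = Some (per w i)"
  using norel_periods_some[OF nr, of i] unfolding per_def by auto

lemma per_ge1: "per w i \<ge> 1"
  using periods_ge1[OF per_some] .

lemma per_Suc_ex: "\<exists>T::nat. T \<ge> 1 \<and> znorm (real T *\<^sub>R w) < znorm (real (per w i) *\<^sub>R w)"
  using exists_better norel_znorm_pos[OF nr per_ge1] by blast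

lemma per_Suc: "per w (Suc i) = (LEAST T::nat. T \<ge> 1 \<and> znorm (real T *\<^sub>R w) < znorm (real (per w i) *\<^sub>R w))"
  using per_some[of "Suc i"] per_some[of i] per_Suc_ex[of i] by simp

lemma per_dec: "znorm (real (per w (Suc i)) *\<^sub>R w) < znorm (real (per w i) *\<^sub>R w)"
  using LeastI_ex[OF per_Suc_ex[of i]] unfolding per_Suc[of i] by blast

lemma per_least:
  assumes "1 \<le> T" "T < per w (Suc i)"
  shows "znorm (real (per w i) *\<^sub>R w) \<le> znorm (real T *\<^sub>R w)"
  using not_less_Least[of T "\<lambda>T. T \<ge> 1 \<and> znorm (real T *\<^sub>R w) < znorm (real (per w i) *\<^sub>R w)"]
    assms unfolding per_Suc[of i] by auto

lemma per_mono: "per w i < per w (Suc i)"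
proof (cases i)
  case 0
  have "per w 0 = 1" using per_some[of 0] by simp
  moreover have "per w (Suc 0) \<noteq> 1"
    using per_dec[of 0] \<open>per w 0 = 1\<close> by auto
  ultimately show ?thesis using per_ge1[of "Suc 0"] 0 by simp
next
  case (Suc j)
  show ?thesis
  proof (rule ccontr)
    assume "\<not> ?thesis"
    then have le: "per w (Suc (Suc j)) \<le> per w (Suc j)" using Suc by simp
    show False
    proof (cases "per w (Suc (Suc j)) = per w (Suc j)")
      case True then show False using per_dec[of "Suc j"] by simp
    next
      case False
      then have "per w (Suc (Suc j)) < per w (Suc j)" using le by simp
      then have "znorm (real (per w j) *\<^sub>R w) \<le> znorm (real (per w (Suc (Suc j))) *\<^sub>R w)"
        using per_least per_ge1 by blast
      then show False using per_dec[of j] per_dec[of "Suc j"] by simp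
    qed
  qed
qed

lemma per_ge_idx: "per w i \<ge> i"
proof (induction i)
  case 0 then show ?case by simp
next
  case (Suc i) then show ?case using per_mono[of i] by simp
qed

lemma per_bracket:
  assumes X: "X \<ge> 1"
  shows "\<exists>i. real (per w i) \<le> X \<and> X < real (per w (Suc i))"
proof -
  define A where "A = {i. real (per w i) \<le> X}"
  have sub: "A \<subseteq> {..nat \<lceil>X\<rceil>}"
  proof
    fix i assume iA: "i \<in> A"
    have "real i \<le> real (per w i)" using per_ge_idx[of i] by simp
    then have "real i \<le> X" using iA unfolding A_def by simp
    then have "real i \<le> real (nat \<lceil>X\<rceil>)" using real_nat_ceiling_ge[of X] by linarith
    then show "i \<in> {..nat \<lceil>X\<rceil>}" by simp
  qed
  have fA: "finite A" using finite_subset[OF sub] by simp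
  have p0: "per w 0 = 1" using per_some[of 0] by simp
  have "0 \<in> A" unfolding A_def using X p0 by simp
  then have MA: "Max A \<in> A" using fA Max_in by blast
  have nA: "Suc (Max A) \<notin> A"
  proof
    assume "Suc (Max A) \<in> A"
    then have "Suc (Max A) \<le> Max A" using Max_ge[OF fA] by blast
    then show False by simp
  qed
  have "real (per w (Max A)) \<le> X" using MA unfolding A_def by simp
  moreover have "X < real (per w (Suc (Max A)))" using nA unfolding A_def by simp
  ultimately show ?thesis by blast
qed

end

lemma err_bound:
  fixes w k :: "real ^ 'n" and T :: nat
  assumes k: "k \<in> int_vecs"
  shows "\<bar>real T * (k \<bullet> w) - k \<bullet> rnd (real T *\<^sub>R w)\<bar> \<le> real CARD('n) * supnorm k * znorm (real T *\<^sub>R w)"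
proof -
  define e where "e = real T *\<^sub>R w - rnd (real T *\<^sub>R w)"
  define \<epsilon> where "\<epsilon> = znorm (real T *\<^sub>R w)"
  have e_le: "\<bar>e $ i\<bar> \<le> \<epsilon>" for i
    using znorm_coord[of "real T *\<^sub>R w" i] unfolding e_def \<epsilon>_def rnd_def by simp
  have "\<bar>k \<bullet> e\<bar> = \<bar>\<Sum>i\<in>UNIV. k $ i * e $ i\<bar>" by (simp add: inner_sum)
  also have "\<dots> \<le> (\<Sum>i\<in>UNIV. \<bar>k $ i * e $ i\<bar>)" by (rule sum_abs)
  also have "\<dots> \<le> (\<Sum>i\<in>(UNIV::'n set). supnorm k * \<epsilon>)"
    by (intro sum_mono) (simp add: abs_mult mult_mono supnorm_ge e_le supnorm_nonneg)
  also have "\<dots> = real CARD('n) * supnorm k * \<epsilon>" by simp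
  finally show ?thesis unfolding e_def \<epsilon>_def by (simp add: inner_diff_right)
qed

lemma small_dual:
  fixes w :: "real ^ 'n" and T :: nat
  assumes T: "T \<ge> 1"
  defines "K \<equiv> nat \<lfloor>real T powr (1 / real CARD('n))\<rfloor>"
  shows "\<exists>k\<in>int_vecs. k \<noteq> 0 \<and> supnorm k \<le> real K \<and> K \<ge> 1 \<and>
           real T * znorm1 (k \<bullet> w) \<le> real CARD('n) * real K * znorm (real T *\<^sub>R w)"
proof -
  define n where "n = CARD('n)"
  have n0: "n > 0" unfolding n_def by simp
  define r where "r = real T powr (1 / real n)"
  have r1: "r \<ge> 1" unfolding r_def using T by (intro ge_one_powr_ge_zero) auto
  have K1: "K \<ge> 1" unfolding K_def n_def[symmetric] r_def[symmetric] using r1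
    by (simp add: le_nat_iff one_le_floor)
  have Kr: "real K \<le> r" unfolding K_def n_def[symmetric] r_def[symmetric] using r1 by simp
  have rK: "r < real K + 1" unfolding K_def n_def[symmetric] r_def[symmetric] using r1
    by (simp add: floor_less_iff)
  have "r ^ n = r powr real n" using r1 by (simp add: powr_realpow)
  also have "\<dots> = real T powr (1 / real n * real n)" unfolding r_def by (rule powr_powr)
  also have "\<dots> = real T" using n0 T by simp
  finally have "real T = r ^ n" ..
  also have "\<dots> < (real K + 1) ^ n" using rK r1 n0 by (intro power_strict_mono) auto
  finally have Tlt: "T < (K + 1) ^ n" by (metis of_nat_1 of_nat_add of_nat_less_iff of_nat_power)
  define p where "p = rnd (real T *\<^sub>R w)"
  define pz where "pz i = round (real T * w $ i)" for i
  define V where "V = PiE (UNIV::'n set) (\<lambda>_. {0..int K})"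
  define f where "f v = (\<Sum>i\<in>UNIV. v i * pz i) mod int T" for v :: "'n \<Rightarrow> int"
  have fV: "f ` V \<subseteq> {0..<int T}" unfolding f_def using T by auto
  have cV: "card V = (K + 1) ^ n" unfolding V_def n_def by (simp add: card_PiE) (metis Suc_eq_plus1 nat_int of_nat_Suc of_nat_1 of_nat_add)
  have "\<not> inj_on f V"
  proof
    assume "inj_on f V"
    then have "card V \<le> card {0..<int T}" using card_inj_on_le[OF _ fV] by blast
    then show False using cV Tlt by simp
  qed
  then obtain v1 v2 where v: "v1 \<in> V" "v2 \<in> V" "v1 \<noteq> v2" "f v1 = f v2"
    unfolding inj_on_def by blast
  have "int T dvd (\<Sum>i\<in>UNIV. v1 i * pz i) - (\<Sum>i\<in>UNIV. v2 i * pz i)"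
    using v(4) unfolding f_def by (simp add: mod_eq_dvd_iff)
  then obtain m where m: "(\<Sum>i\<in>UNIV. (v1 i - v2 i) * pz i) = int T * m"
    by (auto simp: sum_subtractf left_diff_distrib elim!: dvdE)
  define k :: "real ^ 'n" where "k = (\<chi> i. of_int (v1 i - v2 i))"
  have ki: "k \<in> int_vecs" unfolding k_def int_vecs_def by auto
  have k0: "k \<noteq> 0"
  proof
    assume "k = 0"
    then have "v1 i = v2 i" for i unfolding k_def by (metis vec_lambda_beta zero_index of_int_eq_0_iff eq_iff_diff_eq_0)
    then show False using v(3) by blast
  qed
  have kK: "supnorm k \<le> real K"
  proof (rule supnorm_le)
    fix i
    have "v1 i \<in> {0..int K}" "v2 i \<in> {0..int K}" using v(1,2) unfolding V_def by auto
    then have "\<bar>v1 i - v2 i\<bar> \<le> int K" by auto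
    then show "\<bar>k $ i\<bar> \<le> real K" unfolding k_def
      by (metis of_int_abs of_int_le_iff of_int_of_nat_eq vec_lambda_beta)
  qed
  have kp: "k \<bullet> p = real T * of_int m"
  proof -
    have "k \<bullet> p = (\<Sum>i\<in>UNIV. real_of_int ((v1 i - v2 i) * pz i))"
      unfolding inner_sum k_def p_def rnd_def pz_def by simp
    also have "\<dots> = real_of_int (int T * m)" by (simp only: of_int_sum[symmetric] m)
    finally show ?thesis by simp
  qed
  have eb: "\<bar>real T * (k \<bullet> w) - k \<bullet> p\<bar> \<le> real n * supnorm k * znorm (real T *\<^sub>R w)"
    using err_bound[OF ki, of T w] unfolding p_def n_def .
  have "real T * znorm1 (k \<bullet> w) \<le> real T * \<bar>k \<bullet> w - of_int m\<bar>"
    by (intro mult_left_mono znorm1_le) auto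
  also have "\<dots> = \<bar>real T * (k \<bullet> w) - k \<bullet> p\<bar>" unfolding kp
    by (metis abs_mult abs_of_nat right_diff_distrib)
  also have "\<dots> \<le> real n * supnorm k * znorm (real T *\<^sub>R w)" by (rule eb)
  also have "\<dots> \<le> real n * real K * znorm (real T *\<^sub>R w)"
    using kK by (intro mult_right_mono mult_left_mono znorm_nonneg) auto
  finally show ?thesis using ki k0 kK K1 unfolding n_def by blast
qed

lemma supnorm_pos: "k \<in> int_vecs \<Longrightarrow> k \<noteq> 0 \<Longrightarrow> supnorm k \<ge> 1"
proof -
  assume k: "k \<in> int_vecs" "k \<noteq> 0"
  then obtain i where "k $ i \<noteq> 0" by (metis vec_eq_iff zero_index)
  moreover have "k $ i \<in> \<int>" using k unfolding int_vecs_def by auto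
  ultimately have "1 \<le> \<bar>k $ i\<bar>" using Ints_nonzero_abs_ge1 by blast
  then show ?thesis using supnorm_ge[of k i] by linarith
qed

lemma inc3:
  fixes \<tau> :: real
  assumes tau: "\<tau> \<ge> 0"
  shows "(Omega_up \<tau> :: (real ^ 'n) set) \<subseteq> Omega_low (real CARD('n) * \<tau>)"
proof
  fix w :: "real ^ 'n"
  assume "w \<in> Omega_up \<tau>"
  then obtain C where C: "C > 0" and H: "\<And>k. k \<in> int_vecs \<Longrightarrow> k \<noteq> 0 \<Longrightarrow>
      znorm1 (k \<bullet> w) \<ge> C * supnorm k powr (-(1 + \<tau>) * real CARD('n))"
    unfolding Omega_up_def by blast
  define n where "n = CARD('n)"
  have n0: "real n > 0" unfolding n_def by simp
  have "\<forall>T::nat. T \<ge> 1 \<longrightarrow> znorm (real T *\<^sub>R w) \<ge> (C / real n) * real T powr (-(1 + real n * \<tau>) / real n)"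
  proof (intro allI impI)
    fix T :: nat assume T: "T \<ge> 1"
    define t where "t = real T"
    have t1: "t \<ge> 1" unfolding t_def using T by simp
    define r where "r = t powr (1 / real n)"
    have r1: "r \<ge> 1" unfolding r_def using t1 by (intro ge_one_powr_ge_zero) auto
    define K where "K = nat \<lfloor>real T powr (1 / real CARD('n))\<rfloor>"
    obtain k where ki: "k \<in> int_vecs" and k0: "k \<noteq> 0" and kK: "supnorm k \<le> real K" and K1: "K \<ge> 1"
      and ineq: "real T * znorm1 (k \<bullet> w) \<le> real CARD('n) * real K * znorm (real T *\<^sub>R w)"
      using small_dual[OF T, of w] unfolding K_def by blast
    have Kr: "real K \<le> r" unfolding K_def r_def t_def n_def using r1 r_def t_def n_def by simp
    define e where "e = -(1 + \<tau>) * real n"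
    have e0: "e \<le> 0" unfolding e_def using tau n0 by (intro mult_nonpos_nonneg) auto
    define \<epsilon> where "\<epsilon> = znorm (real T *\<^sub>R w)"
    have "C * r powr e \<le> C * real K powr e"
      using K1 Kr e0 C by (intro mult_left_mono powr_mono2') auto
    also have "\<dots> \<le> C * supnorm k powr e"
      using K1 kK e0 C supnorm_pos[OF ki k0] by (intro mult_left_mono powr_mono2') auto
    also have "\<dots> \<le> znorm1 (k \<bullet> w)" using H[OF ki k0] unfolding e_def n_def .
    finally have A: "C * r powr e \<le> znorm1 (k \<bullet> w)" .
    have re: "r powr e = t powr (-(1 + \<tau>))" unfolding r_def e_def using n0
      by (simp add: powr_powr)
    have "t * (C * t powr (-(1 + \<tau>))) \<le> t * znorm1 (k \<bullet> w)"
      using A re t1 by (intro mult_left_mono) auto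
    also have "\<dots> \<le> real n * real K * \<epsilon>" using ineq unfolding t_def n_def \<epsilon>_def .
    also have "\<dots> \<le> real n * r * \<epsilon>"
      using Kr n0 by (intro mult_right_mono mult_left_mono) (auto simp: \<epsilon>_def znorm_nonneg)
    finally have B: "C * (t * t powr (-(1 + \<tau>))) \<le> real n * r * \<epsilon>" by (simp add: algebra_simps)
    have tt: "t * t powr (-(1 + \<tau>)) = r * t powr (-(1 + real n * \<tau>) / real n)"
    proof -
      have "t * t powr (-(1 + \<tau>)) = t powr 1 * t powr (-(1 + \<tau>))" using t1 by simp
      also have "\<dots> = t powr (1 + (-(1 + \<tau>)))" by (rule powr_add[symmetric])
      also have "1 + (-(1 + \<tau>)) = 1 / real n + (-(1 + real n * \<tau>) / real n)"
        using n0 by (simp add: field_simps)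
      also have "t powr \<dots> = r * t powr (-(1 + real n * \<tau>) / real n)"
        unfolding r_def by (rule powr_add)
      finally show ?thesis .
    qed
    have "r * (C * t powr (-(1 + real n * \<tau>) / real n)) \<le> r * (real n * \<epsilon>)"
      using B unfolding tt by (simp add: algebra_simps)
    then have "C * t powr (-(1 + real n * \<tau>) / real n) \<le> real n * \<epsilon>" using r1 by simp
    then show "znorm (real T *\<^sub>R w) \<ge> (C / real n) * real T powr (-(1 + real n * \<tau>) / real n)"
      using n0 unfolding \<epsilon>_def t_def by (simp add: field_simps)
  qed
  then show "w \<in> Omega_low (real CARD('n) * \<tau>)"
    unfolding Omega_low_def n_def using C by (intro CollectI exI[of _ "C / real CARD('n)"]) auto
qed

lemma low_per:
  fixes \<sigma> :: real
  assumes s: "\<sigma> \<ge> 0"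
  shows "(Omega_low \<sigma> :: (real ^ 'n) set) \<subseteq> Omega_per \<sigma>"
proof
  fix w :: "real ^ 'n"
  assume "w \<in> Omega_low \<sigma>"
  then obtain C where C: "C > 0" and H: "\<And>T::nat. T \<ge> 1 \<Longrightarrow>
      znorm (real T *\<^sub>R w) \<ge> C * real T powr (-(1 + \<sigma>) / real CARD('n))"
    unfolding Omega_low_def by blast
  define n where "n = CARD('n)"
  have n0: "real n > 0" unfolding n_def by simp
  define a where "a = (1 + \<sigma>) / real n"
  have an: "a * real n = 1 + \<sigma>" unfolding a_def using n0 by simp
  have "real t' \<le> (2 / C) ^ n * real t powr (1 + \<sigma>)"
    if ti: "periods w i = Some t" and ti': "periods w (Suc i) = Some t'" for i t t'
  proof -
    have t1: "t \<ge> 1" using periods_ge1[OF ti] .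
    define \<epsilon> where "\<epsilon> = znorm (real t *\<^sub>R w)"
    have ta: "real t powr a > 0" using t1 by simp
    have ex: "-(1 + \<sigma>) / real CARD('n) = - a" unfolding a_def n_def by (simp add: field_simps)
    have "real t powr (-(1 + \<sigma>) / real CARD('n)) = inverse (real t powr a)"
      unfolding ex by (rule powr_minus)
    then have epsC: "\<epsilon> \<ge> C / real t powr a"
      using H[OF t1] unfolding \<epsilon>_def by (simp add: divide_inverse)
    have eps0: "\<epsilon> > 0" using epsC C ta by (meson divide_pos_pos less_le_trans)
    have epsh: "\<epsilon> \<le> 1/2" unfolding \<epsilon>_def by (rule znorm_le_half)
    define M where "M = nat \<lfloor>1 / \<epsilon>\<rfloor> + 1"
    have M1: "M \<ge> 1" unfolding M_def by simp
    have Mgt: "1 / \<epsilon> < real M" unfolding M_def using eps0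
      by (metis add.commute floor_less_iff less_add_one of_int_of_nat_eq of_nat_1 of_nat_add
          real_nat_ceiling_ge le_nat_floor le_less_trans linorder_not_le nat_le_iff_add order_less_le_trans)
    have "real M \<le> 1 / \<epsilon> + 1" unfolding M_def using eps0 by simp
    also have "\<dots> \<le> 2 / \<epsilon>" using eps0 epsh by (simp add: field_simps)
    finally have Mle: "real M \<le> 2 / \<epsilon>" .
    have "1 / real M < \<epsilon>" using Mgt eps0 M1 by (simp add: field_simps)
    then obtain T where T: "1 \<le> T" "T \<le> M ^ n" "znorm (real T *\<^sub>R w) < \<epsilon>"
      using dirichlet[OF M1, of w] unfolding n_def by (meson less_trans)
    then obtain t'' where "periods w (Suc i) = Some t''" "t'' \<le> T"
      using periods_Suc_le[OF ti] unfolding \<epsilon>_def by blast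
    then have "t' \<le> M ^ n" using ti' T by simp
    then have "real t' \<le> real M ^ n" by (metis of_nat_le_iff of_nat_power)
    also have "\<dots> \<le> (2 / \<epsilon>) ^ n" using Mle by (intro power_mono) auto
    also have "\<dots> \<le> (2 * real t powr a / C) ^ n"
    proof (intro power_mono)
      have "C / real t powr a \<le> \<epsilon>" by (rule epsC)
      then have "C \<le> \<epsilon> * real t powr a" using ta by (simp add: field_simps)
      then show "2 / \<epsilon> \<le> 2 * real t powr a / C" using C eps0 by (simp add: field_simps)
    qed (use eps0 in auto)
    also have "\<dots> = (2 / C) ^ n * (real t powr a) ^ n" by (simp add: power_mult_distrib[symmetric])
    also have "(real t powr a) ^ n = real t powr (1 + \<sigma>)"
      using ta by (simp add: powr_realpow[symmetric] powr_powr an)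
    finally show ?thesis .
  qed
  then show "w \<in> Omega_per \<sigma>" unfolding Omega_per_def using C by (intro CollectI exI[of _ "(2 / C) ^ n"]) auto
qed

lemma nat_floor_Ints: "x \<in> \<int> \<Longrightarrow> x \<ge> 0 \<Longrightarrow> real (nat \<lfloor>x\<rfloor>) = x"
  by (auto elim!: Ints_cases)

lemma low_norel:
  fixes \<sigma> :: real
  assumes s: "\<sigma> \<ge> 0" and g: "(real CARD('n) - 1) * (1 + \<sigma>) < real CARD('n)"
    and w: "(w :: real ^ 'n) \<in> Omega_low \<sigma>"
  shows "norel w"
  unfolding norel_def
proof (intro ballI impI notI)
  fix k :: "real ^ 'n"
  assume ki: "k \<in> int_vecs" and k0: "k \<noteq> 0" and kw: "k \<bullet> w \<in> \<int>"
  from w obtain C where C: "C > 0" and H: "\<And>T::nat. T \<ge> 1 \<Longrightarrow>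
      znorm (real T *\<^sub>R w) \<ge> C * real T powr (-(1 + \<sigma>) / real CARD('n))"
    unfolding Omega_low_def by blast
  define n where "n = CARD('n)"
  have n0: "real n > 0" unfolding n_def by simp
  have n1: "n \<ge> 1" unfolding n_def by (simp add: Suc_leI)
  obtain m where m: "k \<bullet> w = of_int m" using kw by (auto elim: Ints_cases)
  obtain j0 where j0: "supnorm k = \<bar>k $ j0\<bar>" using supnorm_attained by blast
  define K where "K = nat \<lfloor>\<bar>k $ j0\<bar>\<rfloor>"
  have kj0: "\<bar>k $ j0\<bar> = real K" unfolding K_def
    using ki by (intro nat_floor_Ints[symmetric]) (auto simp: int_vecs_def)
  have K1: "K \<ge> 1" using supnorm_pos[OF ki k0] j0 kj0 by simp
  have Kmax: "\<And>i. \<bar>k $ i\<bar> \<le> real K" using supnorm_ge[of k] j0 kj0 by simp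
  define a where "a = (1 + \<sigma>) / real n"
  have a0: "a > 0" unfolding a_def using s n0 by simp
  define \<gamma> where "\<gamma> = 1 - real (n - 1) * a"
  have \<gamma>0: "\<gamma> > 0"
  proof -
    have "real (n - 1) * (1 + \<sigma>) < real n" using g n1 unfolding n_def by (simp add: of_nat_diff)
    then have "real (n - 1) * a < 1" unfolding a_def using n0 by (simp add: field_simps)
    then show ?thesis unfolding \<gamma>_def by simp
  qed
  define B where "B = real (2 * n * K + 3)"
  have B0: "B > 0" unfolding B_def of_nat_0_less_iff by simp
  have bound: "C * real M powr \<gamma> \<le> real n * B powr a" if M1: "M \<ge> 1" for M :: nat
  proof -
    define N where "N = M ^ (n - 1) * (2 * n * K + 3)"
    obtain T where T: "1 \<le> T" "T \<le> N" "znorm (real T *\<^sub>R w) \<le> real N * \<bar>k \<bullet> w - of_int m\<bar> / real K + real n / real M"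
      using near_dirichlet[OF ki kj0 Kmax K1 M1 N_def[unfolded n_def], of w m] m
      unfolding n_def by auto
    have zT: "znorm (real T *\<^sub>R w) \<le> real n / real M" using T(3) m by simp
    have ex: "-(1 + \<sigma>) / real CARD('n) = - a" unfolding a_def n_def by (simp add: field_simps)
    have RN: "real N = real M powr real (n - 1) * B"
      unfolding N_def B_def using M1 by (simp add: powr_realpow)
    have Npos: "real N > 0" using RN B0 M1 by simp
    have "C * real N powr (- a) \<le> C * real T powr (- a)"
      using T(1,2) C a0 by (intro mult_left_mono powr_mono2') auto
    also have "\<dots> \<le> real n / real M" using H[OF T(1)] zT unfolding ex by simp
    finally have "C * inverse (real N powr a) \<le> real n / real M" by (simp add: powr_minus)
    then have "C \<le> real n / real M * real N powr a" using Npos by (simp add: field_simps)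
    also have "real N powr a = real M powr (real (n - 1) * a) * B powr a"
      unfolding RN using M1 B0 by (simp add: powr_mult powr_powr)
    finally have "C * real M \<le> real n * (real M powr (real (n - 1) * a) * B powr a)"
      using M1 by (simp add: field_simps)
    moreover have "real M = real M powr \<gamma> * real M powr (real (n - 1) * a)"
      using M1 unfolding \<gamma>_def by (simp add: powr_add[symmetric])
    ultimately have "C * real M powr \<gamma> * real M powr (real (n - 1) * a)
        \<le> real n * B powr a * real M powr (real (n - 1) * a)" by (simp add: algebra_simps)
    then show ?thesis using M1 by simp
  qed
  define R where "R = real n * B powr a / C"
  define M where "M = nat \<lceil>R powr (1 / \<gamma>)\<rceil> + 1"
  have M1: "M \<ge> 1" unfolding M_def by simp
  have R0: "R > 0" unfolding R_def using C n0 B0 by simp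
  have "R powr (1 / \<gamma>) < real M" unfolding M_def
    using real_nat_ceiling_ge[of "R powr (1 / \<gamma>)"] by linarith
  then have "(R powr (1 / \<gamma>)) powr \<gamma> < real M powr \<gamma>"
    using \<gamma>0 by (intro powr_less_mono2) auto
  then have "R < real M powr \<gamma>" using \<gamma>0 R0 by (simp add: powr_powr)
  then have "C * R < C * real M powr \<gamma>" using C by simp
  then show False using bound[OF M1] C unfolding R_def by simp
qed

lemma alg2:
  fixes \<delta> C K p n a D \<tau> :: real
  assumes n: "n \<ge> 1" and d: "\<delta> > 0" and K: "K \<ge> 1" and p: "p \<ge> 1" and C: "C > 0"
    and a: "a \<ge> 0" and D: "D > 0" and aD: "a * D = n * (1 + \<tau>)"
    and g: "1 + (1 / n - 1) * a = 1 / D"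
    and h1: "1 / (2 * \<delta>) < C * p powr a"
    and h2: "p * \<delta> \<le> 7 * n^2 * K * \<delta> powr (1 / n)"
  shows "\<delta> \<ge> (2 * C * (7 * n^2) powr a) powr (- D) * K powr (- (1 + \<tau>) * n)"
proof -
  define B where "B = 2 * C * (7 * n^2) powr a"
  have B0: "B > 0" unfolding B_def using C n by simp
  have e: "\<delta> powr (1 / n) / \<delta> = \<delta> powr (1 / n - 1)" using d by (simp add: powr_diff)
  have "p \<le> 7 * n^2 * K * (\<delta> powr (1 / n) / \<delta>)" using h2 d by (simp add: field_simps)
  then have p1: "p \<le> 7 * n^2 * K * \<delta> powr (1 / n - 1)" unfolding e .
  have "p powr a \<le> (7 * n^2 * K * \<delta> powr (1 / n - 1)) powr a"
    using p1 p a by (intro powr_mono2) auto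
  also have "\<dots> = (7 * n^2) powr a * K powr a * \<delta> powr ((1 / n - 1) * a)"
    using d K n by (simp add: powr_mult powr_powr)
  finally have pa: "p powr a \<le> (7 * n^2) powr a * K powr a * \<delta> powr ((1 / n - 1) * a)" .
  have "1 < 2 * \<delta> * (C * p powr a)" using h1 d by (simp add: field_simps)
  also have "\<dots> \<le> 2 * \<delta> * (C * ((7 * n^2) powr a * K powr a * \<delta> powr ((1 / n - 1) * a)))"
    using pa d C by (intro mult_left_mono) auto
  also have "\<dots> = B * K powr a * (\<delta> powr 1 * \<delta> powr ((1 / n - 1) * a))"
    unfolding B_def using d by (simp add: algebra_simps)
  also have "\<delta> powr 1 * \<delta> powr ((1 / n - 1) * a) = \<delta> powr (1 / D)"
    by (simp only: powr_add[symmetric] g)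
  finally have "1 < B * K powr a * \<delta> powr (1 / D)" .
  then have lt: "1 / (B * K powr a) < \<delta> powr (1 / D)" using B0 K by (simp add: field_simps)
  have "(1 / (B * K powr a)) powr D < (\<delta> powr (1 / D)) powr D"
    using lt B0 K D by (intro powr_less_mono2) auto
  also have "\<dots> = \<delta>" using D d by (simp add: powr_powr)
  also have "(1 / (B * K powr a)) powr D = B powr (- D) * K powr (- (1 + \<tau>) * n)"
  proof -
    have "(1 / (B * K powr a)) powr D = 1 powr D / (B * K powr a) powr D"
      by (rule powr_divide)
    then have "(1 / (B * K powr a)) powr D = inverse ((B * K powr a) powr D)"
      by (simp add: divide_inverse)
    also have "(B * K powr a) powr D = B powr D * K powr (n * (1 + \<tau>))"
      using B0 K by (simp add: powr_mult powr_powr aD)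
    also have "inverse (B powr D * K powr (n * (1 + \<tau>))) = inverse (B powr D) * inverse (K powr (n * (1 + \<tau>)))"
      by (rule inverse_mult_distrib)
    also have "\<dots> = B powr (- D) * K powr (- (n * (1 + \<tau>)))"
      by (simp only: powr_minus)
    also have "- (n * (1 + \<tau>)) = - (1 + \<tau>) * n" by (simp add: algebra_simps)
    finally show ?thesis .
  qed
  finally show ?thesis unfolding B_def by simp
qed

lemma algA:
  fixes \<delta> K n \<tau> :: real
  assumes n: "n \<ge> 1" and d: "\<delta> > 0" and K: "K \<ge> 1" and t: "\<tau> \<ge> 0"
    and h: "(2 * n * K + 3) * \<delta> powr (1 / n) > 1 / 2"
  shows "\<delta> \<ge> (10 * n) powr (- n) * K powr (- (1 + \<tau>) * n)"
proof -
  define x where "x = \<delta> powr (1 / n)"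
  have x0: "x > 0" unfolding x_def using d by simp
  have Q: "2 * n * K + 3 \<le> 5 * n * K"
  proof -
    have "1 * 1 \<le> n * K" using n K by (intro mult_mono) auto
    then have "3 \<le> 3 * (n * K)" by (simp add: mult.commute)
    then show ?thesis by (simp add: mult.commute)
  qed
  have "1 / 2 < (2 * n * K + 3) * x" using h unfolding x_def .
  also have "\<dots> \<le> 5 * n * K * x" using Q x0 by (intro mult_right_mono) auto
  finally have "1 / (10 * n * K) < x" using n K by (simp add: field_simps)
  then have "(1 / (10 * n * K)) powr n < x powr n" using n K by (intro powr_less_mono2) auto
  also have "x powr n = \<delta>" unfolding x_def using n d by (simp add: powr_powr)
  also have "(1 / (10 * n * K)) powr n = (10 * n) powr (- n) * K powr (- n)"
  proof -
    have "(1 / (10 * n * K)) powr n = 1 powr n / (10 * n * K) powr n" by (rule powr_divide)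
    also have "\<dots> = inverse ((10 * n) powr n * K powr n)" using n K by (simp add: powr_mult divide_inverse)
    also have "\<dots> = inverse ((10 * n) powr n) * inverse (K powr n)" by (rule inverse_mult_distrib)
    also have "\<dots> = (10 * n) powr (- n) * K powr (- n)" by (simp only: powr_minus)
    finally show ?thesis .
  qed
  finally have A: "(10 * n) powr (- n) * K powr (- n) < \<delta>" .
  have "K powr (- (1 + \<tau>) * n) \<le> K powr (- n)" using K n t
    by (intro powr_mono) (auto simp: algebra_simps)
  then have "(10 * n) powr (- n) * K powr (- (1 + \<tau>) * n) \<le> (10 * n) powr (- n) * K powr (- n)"
    by (intro mult_left_mono) auto
  then show ?thesis using A by simp
qed

lemma inc2:
  fixes \<tau> :: real
  assumes tau: "\<tau> \<ge> 0"
  defines "\<tau>' \<equiv> \<tau> / ((real CARD('n) - 1) * \<tau> + real CARD('n))"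
  shows "(Omega_tilde \<tau>' :: (real ^ 'n) set) \<subseteq> Omega_up \<tau>"
proof
  fix w :: "real ^ 'n"
  assume "w \<in> Omega_tilde \<tau>'"
  then obtain C where C: "C > 0" and Hp: "\<And>i t t'. periods w i = Some t \<Longrightarrow> periods w (Suc i) = Some t' \<Longrightarrow>
      real t' \<le> C * real t powr (1 + \<tau>')" and nr: "norel w"
    unfolding Omega_tilde_def Omega_per_def norel_def by blast
  define n where "n = CARD('n)"
  define rn where "rn = real n"
  have rn1: "rn \<ge> 1" unfolding rn_def n_def by (simp add: Suc_leI)
  have n1: "n \<ge> 1" unfolding n_def by (simp add: Suc_leI)
  define D where "D = (rn - 1) * \<tau> + rn"
  have "(rn - 1) * \<tau> \<ge> 0" using rn1 tau by simp
  then have D0: "D > 0" unfolding D_def using rn1 by linarith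
  define a where "a = 1 + \<tau>'"
  have tau'D: "\<tau>' * D = \<tau>" unfolding \<tau>'_def D_def rn_def n_def using D0[unfolded D_def rn_def n_def] by simp
  have aD: "a * D = rn * (1 + \<tau>)" unfolding a_def using tau'D by (simp add: algebra_simps D_def)
  have a0: "a \<ge> 0" unfolding a_def \<tau>'_def using tau rn1 D0 unfolding D_def rn_def n_def
    by (simp add: divide_nonneg_pos)
  have g: "1 + (1 / rn - 1) * a = 1 / D"
  proof -
    have "(1 / rn - 1) * a * D = (1 / rn - 1) * (rn * (1 + \<tau>))" using aD by (simp add: mult.assoc)
    also have "\<dots> = (1 - rn) * (1 + \<tau>)" using rn1 by (simp add: field_simps)
    finally have "(1 / rn - 1) * a * D = 1 - D" unfolding D_def by (simp add: algebra_simps)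
    then show ?thesis using D0 by (simp add: field_simps)
  qed
  define B where "B = 2 * C * (7 * rn^2) powr a"
  define c where "c = min ((10 * rn) powr (- rn)) (B powr (- D))"
  have c0: "c > 0" unfolding c_def B_def using rn1 C by simp
  have "c * supnorm k powr (- (1 + \<tau>) * rn) \<le> znorm1 (k \<bullet> w)"
    if ki: "k \<in> int_vecs" and k0: "k \<noteq> 0" for k
  proof -
    define m where "m = round (k \<bullet> w)"
    define \<delta> where "\<delta> = \<bar>k \<bullet> w - of_int m\<bar>"
    have \<delta>eq: "znorm1 (k \<bullet> w) = \<delta>" unfolding \<delta>_def m_def by (rule znorm1_eq)
    have \<delta>0: "\<delta> > 0"
    proof (rule ccontr)
      assume "\<not> \<delta> > 0"
      then have "k \<bullet> w = of_int m" unfolding \<delta>_def by simp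
      then show False using nr ki k0 unfolding norel_def by auto
    qed
    have \<delta>h: "\<delta> \<le> 1/2" unfolding \<delta>_def m_def using of_int_round_abs_le[of "k \<bullet> w"] by (simp add: abs_minus_commute)
    obtain j0 where j0: "supnorm k = \<bar>k $ j0\<bar>" using supnorm_attained by blast
    define K where "K = nat \<lfloor>\<bar>k $ j0\<bar>\<rfloor>"
    have kj0: "\<bar>k $ j0\<bar> = real K" unfolding K_def
      using ki by (intro nat_floor_Ints[symmetric]) (auto simp: int_vecs_def)
    have K1: "K \<ge> 1" using supnorm_pos[OF ki k0] j0 kj0 by simp
    have Kmax: "\<And>i. \<bar>k $ i\<bar> \<le> real K" using supnorm_ge[of k] j0 kj0 by simp
    have sK: "supnorm k = real K" using j0 kj0 by simp
    define x where "x = \<delta> powr (1 / rn)"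
    have x0: "x > 0" unfolding x_def using \<delta>0 by simp
    define Q where "Q = 2 * rn * real K + 3"
    show ?thesis
    proof (cases "Q * x > 1 / 2")
      case True
      have "\<delta> \<ge> (10 * rn) powr (- rn) * real K powr (- (1 + \<tau>) * rn)"
        using algA[OF rn1 \<delta>0 _ tau, of "real K"] True K1 unfolding Q_def x_def by simp
      moreover have "c * real K powr (- (1 + \<tau>) * rn) \<le> (10 * rn) powr (- rn) * real K powr (- (1 + \<tau>) * rn)"
        unfolding c_def by (intro mult_right_mono) auto
      ultimately show ?thesis using \<delta>eq sK by simp
    next
      case False
      then have Qx: "Q * x \<le> 1 / 2" by simp
      have "1 * 1 \<le> rn * real K" using rn1 K1 by (intro mult_mono) auto
      then have rnK: "rn * real K \<ge> 1" by simp
      have Qe: "Q = 2 * (rn * real K) + 3" unfolding Q_def by simp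
      have Q5: "Q \<ge> 5" using rnK Qe by linarith
      have "5 * x \<le> Q * x" using Q5 x0 by (intro mult_right_mono) auto
      then have x10: "x \<le> 1 / 10" using Qx by linarith
      define M where "M = nat \<lfloor>1 / x\<rfloor>"
      have Mle: "real M \<le> 1 / x" unfolding M_def using x0 by simp
      have RM: "real M = of_int \<lfloor>1 / x\<rfloor>" unfolding M_def using x0 by simp
      have Mgt: "1 / x < real M + 1" unfolding RM using floor_correct[of "1 / x"] by simp
      have "10 \<le> 1 / x" using x10 x0 by (simp add: field_simps)
      then have "real M \<ge> 1" using Mgt by linarith
      then have M1: "M \<ge> 1" by simp
      have invM: "1 / real M \<le> 2 * x"
      proof -
        have "1 / x < 2 * real M" using Mgt M1 by simp
        then show ?thesis using x0 M1 by (simp add: field_simps)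
      qed
      define N where "N = M ^ (n - 1) * (2 * n * K + 3)"
      have RN: "real N = real M ^ (n - 1) * Q" unfolding N_def Q_def rn_def by simp
      have xn: "x ^ n = \<delta>"
      proof -
        have "x ^ n = x powr real n" using x0 by (simp add: powr_realpow)
        also have "\<dots> = \<delta>" unfolding x_def rn_def using \<delta>0 n1 by (simp add: powr_powr)
        finally show ?thesis .
      qed
      have Nd: "real N * \<delta> \<le> Q * x"
      proof -
        have "real M ^ (n - 1) \<le> (1 / x) ^ (n - 1)" using Mle by (intro power_mono) auto
        then have "real M ^ (n - 1) * x ^ (n - 1) \<le> 1"
          using x0 by (simp add: power_divide field_simps)
        then have "real M ^ (n - 1) * x ^ (n - 1) * (Q * x) \<le> Q * x"
          using Q5 x0 by (simp add: mult_le_cancel_right1)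
        moreover have "x ^ n = x ^ (n - 1) * x" using n1 power_minus_mult[of n x] by simp
        ultimately show ?thesis unfolding RN xn[symmetric] by (simp add: algebra_simps)
      qed
      have Nd2: "real N * \<delta> \<le> 1 / 2" using Nd Qx by simp
      obtain TB where TB: "1 \<le> TB" "TB \<le> N"
        "znorm (real TB *\<^sub>R w) \<le> real N * \<bar>k \<bullet> w - of_int m\<bar> / real K + real CARD('n) / real M"
        using near_dirichlet[OF ki kj0 Kmax K1 M1 N_def[unfolded n_def], of w m] Nd2
        unfolding \<delta>_def by auto
      have zTB: "znorm (real TB *\<^sub>R w) \<le> 7 * rn * x"
      proof -
        have "real N * \<delta> / real K \<le> Q * x / real K" using Nd K1 by (simp add: divide_right_mono)
        also have "\<dots> \<le> 5 * rn * x"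
        proof -
          have "5 * rn * real K = 5 * (rn * real K)" by simp
          then have "Q \<le> 5 * rn * real K" using Qe rnK by linarith
          then show ?thesis using K1 x0 by (simp add: field_simps)
        qed
        finally have A: "real N * \<delta> / real K \<le> 5 * rn * x" .
        have "rn / real M = rn * (1 / real M)" by simp
        also have "\<dots> \<le> rn * (2 * x)" using invM rn1 by (intro mult_left_mono) auto
        finally have "rn / real M \<le> rn * (2 * x)" .
        then show ?thesis using TB(3) A unfolding \<delta>_def rn_def n_def by simp
      qed
      define X where "X = 1 / (2 * \<delta>)"
      have X1: "X \<ge> 1" unfolding X_def using \<delta>0 \<delta>h by (simp add: field_simps)
      obtain i where i: "real (per w i) \<le> X" "X < real (per w (Suc i))"
        using per_bracket[OF nr X1] by blast
      have NX: "real N \<le> X" unfolding X_def using Nd2 \<delta>0 by (simp add: field_simps)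
      have "real TB \<le> real N" using TB(2) by simp
      then have "real TB < real (per w (Suc i))" using NX i(2) by linarith
      then have "TB < per w (Suc i)" by simp
      then have epsi: "znorm (real (per w i) *\<^sub>R w) \<le> 7 * rn * x"
        using per_least[OF nr TB(1)] zTB by (meson order_trans)
      have pd: "real (per w i) * \<delta> \<le> 1 / 2" using i(1) \<delta>0 unfolding X_def by (simp add: field_simps)
      have "real (per w i) * \<delta> \<le> real CARD('n) * supnorm k * znorm (real (per w i) *\<^sub>R w)"
        using stepA[OF ki, of "per w i" w m] pd unfolding \<delta>_def by simp
      also have "\<dots> \<le> rn * real K * (7 * rn * x)" unfolding sK rn_def n_def using epsi rn1
        by (intro mult_left_mono) (auto simp: rn_def n_def)
      finally have h2: "real (per w i) * \<delta> \<le> 7 * rn^2 * real K * \<delta> powr (1 / rn)"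
        unfolding x_def by (simp add: power2_eq_square algebra_simps)
      have h1: "1 / (2 * \<delta>) < C * real (per w i) powr a"
        using i(2) Hp[OF per_some[OF nr, of i] per_some[OF nr, of "Suc i"]] unfolding X_def a_def by simp
      have p1: "real (per w i) \<ge> 1" using per_ge1[OF nr, of i] by simp
      have "\<delta> \<ge> B powr (- D) * real K powr (- (1 + \<tau>) * rn)"
        using alg2[OF rn1 \<delta>0 _ p1 C a0 D0 aD g h1 h2] K1 unfolding B_def by simp
      moreover have "c * real K powr (- (1 + \<tau>) * rn) \<le> B powr (- D) * real K powr (- (1 + \<tau>) * rn)"
        unfolding c_def by (intro mult_right_mono) auto
      ultimately show ?thesis using \<delta>eq sK by simp
    qed
  qed
  then show "w \<in> Omega_up \<tau>" unfolding Omega_up_def using c0 unfolding rn_def n_def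
    by (intro CollectI exI[of _ c]) auto
qed

theorem mainTheorem1:
  fixes \<tau> :: real
  assumes "\<tau> \<ge> 0"
  defines "\<tau>' \<equiv> \<tau> / ((real CARD('n) - 1) * \<tau> + real CARD('n))"
  shows "(Omega_low \<tau>' :: (real ^ 'n) set) \<subseteq> Omega_tilde \<tau>'
       \<and> (Omega_tilde \<tau>' :: (real ^ 'n) set) \<subseteq> Omega_up \<tau>
       \<and> (Omega_up \<tau> :: (real ^ 'n) set) \<subseteq> Omega_low (real CARD('n) * \<tau>)"
proof (intro conjI)
  define rn where "rn = real CARD('n)"
  have rn1: "rn \<ge> 1" unfolding rn_def by (simp add: Suc_leI)
  define D where "D = (rn - 1) * \<tau> + rn"
  have "(rn - 1) * \<tau> \<ge> 0" using rn1 assms(1) by simp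
  then have D0: "D > 0" unfolding D_def using rn1 by linarith
  have t'D: "\<tau>' = \<tau> / D" unfolding \<tau>'_def D_def rn_def ..
  have t'0: "\<tau>' \<ge> 0" unfolding t'D using D0 assms(1) by simp
  have gcond: "(real CARD('n) - 1) * (1 + \<tau>') < real CARD('n)"
  proof -
    have "(rn - 1) * (1 + \<tau>') * D = (rn - 1) * (D + \<tau>)" unfolding t'D using D0
      by (simp add: field_simps)
    also have "\<dots> = rn * D - rn" unfolding D_def by (simp add: algebra_simps)
    finally have "(rn - 1) * (1 + \<tau>') * D < rn * D" using rn1 by linarith
    then have "(rn - 1) * (1 + \<tau>') < rn" using D0 by simp
    then show ?thesis unfolding rn_def .
  qed
  show "(Omega_low \<tau>' :: (real ^ 'n) set) \<subseteq> Omega_tilde \<tau>'"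
  proof
    fix w :: "real ^ 'n" assume w: "w \<in> Omega_low \<tau>'"
    have "w \<in> Omega_per \<tau>'" using low_per[OF t'0] w by blast
    moreover have "norel w" using low_norel[OF t'0 gcond w] .
    ultimately show "w \<in> Omega_tilde \<tau>'" unfolding Omega_tilde_def norel_def by blast
  qed
  show "(Omega_tilde \<tau>' :: (real ^ 'n) set) \<subseteq> Omega_up \<tau>"
    unfolding \<tau>'_def by (rule inc2[OF assms(1)])
  show "(Omega_up \<tau> :: (real ^ 'n) set) \<subseteq> Omega_low (real CARD('n) * \<tau>)"
    by (rule inc3[OF assms(1)])
qed

end
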